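(* Let $\Bbbk$ be a field, $n\ge2$, $q\in\Bbbk$ a primitive $n$-th root of unity, $T_n(q)$ the Taft algebra and $A$ a unital associative $\Bbbk$-algebra. Let $\cdot:T_n(q)\otimes A\to A$ be a linear map with $g\cdot1_A\in\{0,1_A\}$, and suppose there exists $k\in\{2,\dots,n-1\}$ such that $g^k\cdot a=a$ for all $a\in A$. Then $\cdot$ is a partial action of $T_n(q)$ on $A$ if and only if either $\cdot$ is a global action, or the restriction of $\cdot$ to $\Bbbk C_n\otimes A$ is a partial action of $\Bbbk C_n$ on $A$ with $g\cdot1_A=0$ and $g^ix^j\cdot a=\delta_{j,0}(g^i\cdot a)$ for all $0\le i,j\le n-1$ and $a\in A$.
   Context: The Taft algebra $T_n(q)$ is the Hopf algebra generated by $g,x$ with relations $g^n=1$, $x^n=0$, $xg=qgx$, basis $\{g^ix^j\}$, $g$ group-like, $\Delta(x)=x\otimes1+g\otimes x$, $\varepsilon(x)=0$; $\Bbbk C_n=\mathrm{span}\{1,g,\dots,g^{n-1}\}$. $\delta$ is the Kronecker delta. A partial action of a bialgebra $H$ on $A$ is a linear map $\cdot:H\otimes A\to A$ with $1_H\cdot a=a$, $h\cdot(ab)=(h_1\cdot a)(h_2\cdot b)$, $h\cdot(k\cdot a)=(h_1\cdot1_A)(h_2k\cdot a)$; it is global if moreover $h\cdot1_A=\varepsilon(h)1_A$ for all $h$. *)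

theory Defs
  imports Main "HOL.Vector_Spaces"
begin

definition k_algebra :: "('k::field \<Rightarrow> 'a::ring_1 \<Rightarrow> 'a) \<Rightarrow> bool" where
  "k_algebra sm \<longleftrightarrow> vector_space sm \<and>
     (\<forall>c a b. sm c (a * b) = sm c a * b) \<and> (\<forall>c a b. sm c (a * b) = a * sm c b)"

text \<open>Finite-dimensional bialgebras are given by a finite basis B and structure
  constants: mc b1 b2 b3 = coefficient of b3 in b1*b2; cc b c d = coefficient
  of c \<otimes> d in Delta(b); un = coefficients of the unit; ep = counit on the basis.
  Elements are coefficient functions u :: 'b \<Rightarrow> 'k (only values on B matter).
  A linear map H \<otimes> A \<rightarrow> A is given by its values act b on basis elements b,
  each act b being linear; it is extended linearly in the H-argument.\<close>

definition basis_vec :: "'b \<Rightarrow> 'b \<Rightarrow> 'k::field" where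
  "basis_vec b = (\<lambda>b'. if b' = b then 1 else 0)"

definition hmult :: "'b set \<Rightarrow> ('b \<Rightarrow> 'b \<Rightarrow> 'b \<Rightarrow> 'k::field) \<Rightarrow> ('b \<Rightarrow> 'k) \<Rightarrow> ('b \<Rightarrow> 'k) \<Rightarrow> 'b \<Rightarrow> 'k" where
  "hmult B mc u v = (\<lambda>f. \<Sum>a\<in>B. \<Sum>b\<in>B. u a * v b * mc a b f)"

definition hcomult :: "'b set \<Rightarrow> ('b \<Rightarrow> 'b \<Rightarrow> 'b \<Rightarrow> 'k::field) \<Rightarrow> ('b \<Rightarrow> 'k) \<Rightarrow> 'b \<Rightarrow> 'b \<Rightarrow> 'k" where
  "hcomult B cc u = (\<lambda>c d. \<Sum>b\<in>B. u b * cc b c d)"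

definition hcounit :: "'b set \<Rightarrow> ('b \<Rightarrow> 'k::field) \<Rightarrow> ('b \<Rightarrow> 'k) \<Rightarrow> 'k" where
  "hcounit B ep u = (\<Sum>b\<in>B. u b * ep b)"

definition actL :: "('k::field \<Rightarrow> 'a::ring_1 \<Rightarrow> 'a) \<Rightarrow> 'b set \<Rightarrow> ('b \<Rightarrow> 'a \<Rightarrow> 'a) \<Rightarrow> ('b \<Rightarrow> 'k) \<Rightarrow> 'a \<Rightarrow> 'a" where
  "actL sm B act u x = (\<Sum>b\<in>B. sm (u b) (act b x))"

definition partial_action ::
  "('k::field \<Rightarrow> 'a::ring_1 \<Rightarrow> 'a) \<Rightarrow> 'b set \<Rightarrow> ('b \<Rightarrow> 'b \<Rightarrow> 'b \<Rightarrow> 'k) \<Rightarrow> ('b \<Rightarrow> 'b \<Rightarrow> 'b \<Rightarrow> 'k)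
     \<Rightarrow> ('b \<Rightarrow> 'k) \<Rightarrow> ('b \<Rightarrow> 'a \<Rightarrow> 'a) \<Rightarrow> bool" where
  "partial_action sm B mc cc un act \<longleftrightarrow>
     (\<forall>x. actL sm B act un x = x) \<and>
     (\<forall>u x y. actL sm B act u (x * y) =
        (\<Sum>c\<in>B. \<Sum>d\<in>B. sm (hcomult B cc u c d) (act c x * act d y))) \<and>
     (\<forall>u v x. actL sm B act u (actL sm B act v x) =
        (\<Sum>c\<in>B. \<Sum>d\<in>B. sm (hcomult B cc u c d)
            (act c 1 * actL sm B act (hmult B mc (basis_vec d) v) x)))"

definition global_action ::
  "('k::field \<Rightarrow> 'a::ring_1 \<Rightarrow> 'a) \<Rightarrow> 'b set \<Rightarrow> ('b \<Rightarrow> 'b \<Rightarrow> 'b \<Rightarrow> 'k) \<Rightarrow> ('b \<Rightarrow> 'b \<Rightarrow> 'b \<Rightarrow> 'k)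
     \<Rightarrow> ('b \<Rightarrow> 'k) \<Rightarrow> ('b \<Rightarrow> 'k) \<Rightarrow> ('b \<Rightarrow> 'a \<Rightarrow> 'a) \<Rightarrow> bool" where
  "global_action sm B mc cc un ep act \<longleftrightarrow>
     partial_action sm B mc cc un act \<and>
     (\<forall>u. actL sm B act u 1 = sm (hcounit B ep u) 1)"

fun qbinom :: "'k::comm_ring_1 \<Rightarrow> nat \<Rightarrow> nat \<Rightarrow> 'k" where
  "qbinom q m 0 = 1"
| "qbinom q 0 (Suc k) = 0"
| "qbinom q (Suc m) (Suc k) = qbinom q m k + q ^ Suc k * qbinom q m (Suc k)"

definition primitive_root :: "'k::field \<Rightarrow> nat \<Rightarrow> bool" where
  "primitive_root q n \<longleftrightarrow> q ^ n = 1 \<and> (\<forall>m. 0 < m \<and> m < n \<longrightarrow> q ^ m \<noteq> 1)"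

text \<open>Taft algebra T_n(q): basis g^i x^j, indexed by (i,j), 0 \<le> i,j < n.
  (g^i x^j)(g^l x^m) = q^(j*l) g^((i+l) mod n) x^(j+m) (zero if j+m \<ge> n);
  Delta(g^a x^b) = sum_{l \<le> b} [b,l]_q g^(a+l) x^(b-l) \<otimes> g^a x^l;
  eps(g^i x^j) = delta_{j,0}.\<close>
definition taft_B :: "nat \<Rightarrow> (nat \<times> nat) set" where
  "taft_B n = {0..<n} \<times> {0..<n}"

definition taft_mc :: "nat \<Rightarrow> 'k::field \<Rightarrow> nat \<times> nat \<Rightarrow> nat \<times> nat \<Rightarrow> nat \<times> nat \<Rightarrow> 'k" where
  "taft_mc n q = (\<lambda>(i, j) (l, m) (u, v).
     if u = (i + l) mod n \<and> v = j + m then q ^ (j * l) else 0)"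

definition taft_cc :: "nat \<Rightarrow> 'k::field \<Rightarrow> nat \<times> nat \<Rightarrow> nat \<times> nat \<Rightarrow> nat \<times> nat \<Rightarrow> 'k" where
  "taft_cc n q = (\<lambda>(a, b) (i, j) (i', j').
     if i' = a \<and> j' \<le> b \<and> j = b - j' \<and> i = (a + j') mod n then qbinom q b j' else 0)"

definition taft_unit :: "nat \<times> nat \<Rightarrow> 'k::field" where
  "taft_unit = (\<lambda>(i, j). if i = 0 \<and> j = 0 then 1 else 0)"

definition taft_counit :: "nat \<times> nat \<Rightarrow> 'k::field" where
  "taft_counit = (\<lambda>(i, j). if j = 0 then 1 else 0)"

text \<open>Group algebra k C_n: basis g^i, 0 \<le> i < n.\<close>
definition cyc_B :: "nat \<Rightarrow> nat set" where
  "cyc_B n = {0..<n}"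

definition cyc_mc :: "nat \<Rightarrow> nat \<Rightarrow> nat \<Rightarrow> nat \<Rightarrow> 'k::field" where
  "cyc_mc n i l u = (if u = (i + l) mod n then 1 else 0)"

definition cyc_cc :: "nat \<Rightarrow> nat \<Rightarrow> nat \<Rightarrow> 'k::field" where
  "cyc_cc a i i' = (if i = a \<and> i' = a then 1 else 0)"

definition cyc_unit :: "nat \<Rightarrow> 'k::field" where
  "cyc_unit i = (if i = 0 then 1 else 0)"

end

theory Submission
  imports Defs
begin

locale kalg = vector_space scale for scale :: "'k::field \<Rightarrow> 'a::ring_1 \<Rightarrow> 'a" +
  assumes ml: "scale c (a * b) = scale c a * b" and mr: "scale c (a * b) = a * scale c b"
begin

lemma sm_if: "scale (if P then c else 0) y = (if P then scale c y else 0)"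
  by simp

lemma actL_basis:
  assumes "b \<in> B" "finite B"
  shows "actL scale B act (basis_vec b) x = act b x"
  unfolding actL_def basis_vec_def using assms by (simp add: sm_if)

lemma hcomult_basis:
  assumes "b \<in> B" "finite B"
  shows "hcomult B cc (basis_vec b) c d = cc b c d"
proof -
  have "\<And>ba. (if ba = b then 1 else 0) * cc ba c d = (if ba = b then cc b c d else 0)" by simp
  then show ?thesis unfolding hcomult_def basis_vec_def using assms by simp
qed

lemma hmult_basis:
  assumes "d \<in> B" "finite B"
  shows "hmult B mc (basis_vec d) v f = (\<Sum>e\<in>B. v e * mc d e f)"
proof -
  have "\<And>a. (\<Sum>b\<in>B. (if a = d then 1 else 0) * v b * mc a b f) = (if a = d then (\<Sum>e\<in>B. v e * mc d e f) else 0)" by simp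
  then show ?thesis unfolding hmult_def basis_vec_def using assms by simp
qed

lemma swap3: "(\<Sum>a\<in>A. \<Sum>b\<in>B. \<Sum>c\<in>C. f a b c) = (\<Sum>b\<in>B. \<Sum>c\<in>C. \<Sum>a\<in>A. f a b c)"
  by (subst sum.swap) (rule sum.cong[OF refl], rule sum.swap)

lemma lin_sum: "Vector_Spaces.linear scale scale f \<Longrightarrow> f (sum g A) = (\<Sum>x\<in>A. f (g x))"
proof -
  assume "Vector_Spaces.linear scale scale f"
  then have "\<And>x y. f (x + y) = f x + f y" by (simp add: linear_iff)
  then interpret additive f by unfold_locales
  show ?thesis by (rule sum)
qed

lemma lin_scale: "Vector_Spaces.linear scale scale f \<Longrightarrow> f (scale c x) = scale c (f x)"
  by (simp add: linear_iff)

lemma mult_sum_scale: "a * (\<Sum>f\<in>F. scale (g f) (h f)) = (\<Sum>f\<in>F. scale (g f) (a * h f))"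
  by (simp add: sum_distrib_left mr)


lemma hmult_basis2:
  assumes "d \<in> B" "e \<in> B" "finite B"
  shows "hmult B mc (basis_vec d) (basis_vec e) = mc d e"
proof
  fix f
  have "\<And>e'. basis_vec e e' * mc d e' f = (if e' = e then mc d e f else 0)"
    by (simp add: basis_vec_def)
  then show "hmult B mc (basis_vec d) (basis_vec e) f = mc d e f"
    using assms by (simp add: hmult_basis)
qed

lemma pa_iff:
  assumes fin: "finite B" and lin: "\<forall>b\<in>B. Vector_Spaces.linear scale scale (act b)"
  shows "partial_action scale B mc cc un act \<longleftrightarrow>
   (\<forall>x. actL scale B act un x = x) \<and>
   (\<forall>b\<in>B. \<forall>x y. act b (x*y) = (\<Sum>c\<in>B. \<Sum>d\<in>B. scale (cc b c d) (act c x * act d y))) \<and>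
   (\<forall>b\<in>B. \<forall>e\<in>B. \<forall>x. act b (act e x) =
      (\<Sum>c\<in>B. \<Sum>d\<in>B. scale (cc b c d) (act c 1 * (\<Sum>f\<in>B. scale (mc d e f) (act f x)))))"
  (is "?L \<longleftrightarrow> ?A1 \<and> ?A2 \<and> ?A3")
proof
  assume L: ?L
  then have P1: "\<forall>x. actL scale B act un x = x"
    and P2: "\<And>u x y. actL scale B act u (x * y) =
        (\<Sum>c\<in>B. \<Sum>d\<in>B. scale (hcomult B cc u c d) (act c x * act d y))"
    and P3: "\<And>u v x. actL scale B act u (actL scale B act v x) =
        (\<Sum>c\<in>B. \<Sum>d\<in>B. scale (hcomult B cc u c d)
            (act c 1 * actL scale B act (hmult B mc (basis_vec d) v) x))"
    unfolding partial_action_def by blast+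
  have A2: ?A2
  proof (intro ballI allI)
    fix b x y assume b: "b \<in> B"
    show "act b (x*y) = (\<Sum>c\<in>B. \<Sum>d\<in>B. scale (cc b c d) (act c x * act d y))"
      using P2[of "basis_vec b" x y] b fin by (simp add: actL_basis hcomult_basis)
  qed
  have A3: ?A3
  proof (intro ballI allI)
    fix b e x assume b: "b \<in> B" and e: "e \<in> B"
    have "act b (act e x) = (\<Sum>c\<in>B. \<Sum>d\<in>B. scale (cc b c d)
            (act c 1 * actL scale B act (hmult B mc (basis_vec d) (basis_vec e)) x))"
      using P3[of "basis_vec b" "basis_vec e" x] b e fin by (simp add: actL_basis hcomult_basis)
    also have "\<dots> = (\<Sum>c\<in>B. \<Sum>d\<in>B. scale (cc b c d) (act c 1 * (\<Sum>f\<in>B. scale (mc d e f) (act f x))))"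
      using e fin by (intro sum.cong refl) (simp add: hmult_basis2 actL_def)
    finally show "act b (act e x) = (\<Sum>c\<in>B. \<Sum>d\<in>B. scale (cc b c d) (act c 1 * (\<Sum>f\<in>B. scale (mc d e f) (act f x))))" .
  qed
  show "?A1 \<and> ?A2 \<and> ?A3" using P1 A2 A3 by blast
next
  assume R: "?A1 \<and> ?A2 \<and> ?A3"
  then have A1: ?A1 and A2: "\<And>b x y. b \<in> B \<Longrightarrow> act b (x*y) = (\<Sum>c\<in>B. \<Sum>d\<in>B. scale (cc b c d) (act c x * act d y))"
    and A3: "\<And>b e x. b \<in> B \<Longrightarrow> e \<in> B \<Longrightarrow> act b (act e x) =
      (\<Sum>c\<in>B. \<Sum>d\<in>B. scale (cc b c d) (act c 1 * (\<Sum>f\<in>B. scale (mc d e f) (act f x))))"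
    by blast+
  have P2: "actL scale B act u (x * y) =
        (\<Sum>c\<in>B. \<Sum>d\<in>B. scale (hcomult B cc u c d) (act c x * act d y))" for u x y
  proof -
    have "actL scale B act u (x * y) = (\<Sum>b\<in>B. scale (u b) (\<Sum>c\<in>B. \<Sum>d\<in>B. scale (cc b c d) (act c x * act d y)))"
      unfolding actL_def by (intro sum.cong refl) (simp add: A2)
    also have "\<dots> = (\<Sum>b\<in>B. \<Sum>c\<in>B. \<Sum>d\<in>B. scale (u b * cc b c d) (act c x * act d y))"
      by (simp add: scale_sum_right)
    also have "\<dots> = (\<Sum>c\<in>B. \<Sum>d\<in>B. \<Sum>b\<in>B. scale (u b * cc b c d) (act c x * act d y))"
      by (rule swap3)
    also have "\<dots> = (\<Sum>c\<in>B. \<Sum>d\<in>B. scale (hcomult B cc u c d) (act c x * act d y))"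
      unfolding hcomult_def by (simp add: scale_sum_left)
    finally show ?thesis .
  qed
  have P3: "actL scale B act u (actL scale B act v x) =
        (\<Sum>c\<in>B. \<Sum>d\<in>B. scale (hcomult B cc u c d)
            (act c 1 * actL scale B act (hmult B mc (basis_vec d) v) x))" for u v x
  proof -
    define W where "W c f = act c 1 * act f x" for c f
    have "actL scale B act u (actL scale B act v x) =
       (\<Sum>b\<in>B. scale (u b) (\<Sum>e\<in>B. scale (v e) (act b (act e x))))"
      unfolding actL_def using lin by (intro sum.cong refl) (simp add: lin_sum lin_scale)
    also have "\<dots> = (\<Sum>b\<in>B. \<Sum>e\<in>B. \<Sum>c\<in>B. \<Sum>d\<in>B. \<Sum>f\<in>B. scale (u b * v e * cc b c d * mc d e f) (W c f))"
      unfolding W_def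
      by (intro sum.cong refl) (simp add: A3 scale_sum_right mult_sum_scale mult.assoc)
    also have "\<dots> = (\<Sum>b\<in>B. \<Sum>c\<in>B. \<Sum>d\<in>B. \<Sum>e\<in>B. \<Sum>f\<in>B. scale (u b * v e * cc b c d * mc d e f) (W c f))"
      by (rule sum.cong[OF refl], rule swap3)
    also have "\<dots> = (\<Sum>c\<in>B. \<Sum>d\<in>B. \<Sum>b\<in>B. \<Sum>e\<in>B. \<Sum>f\<in>B. scale (u b * v e * cc b c d * mc d e f) (W c f))"
      by (rule swap3)
    also have "\<dots> = (\<Sum>c\<in>B. \<Sum>d\<in>B. \<Sum>e\<in>B. \<Sum>f\<in>B. \<Sum>b\<in>B. scale (u b * v e * cc b c d * mc d e f) (W c f))"
      by (rule sum.cong[OF refl], rule sum.cong[OF refl], rule swap3)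
    also have "\<dots> = (\<Sum>c\<in>B. \<Sum>d\<in>B. \<Sum>f\<in>B. \<Sum>e\<in>B. \<Sum>b\<in>B. scale (u b * v e * cc b c d * mc d e f) (W c f))"
      by (rule sum.cong[OF refl], rule sum.cong[OF refl], rule sum.swap)
    also have "\<dots> = (\<Sum>c\<in>B. \<Sum>d\<in>B. scale (hcomult B cc u c d)
            (act c 1 * actL scale B act (hmult B mc (basis_vec d) v) x))"
      unfolding W_def hcomult_def actL_def using fin
      by (intro sum.cong refl) (simp add: hmult_basis scale_sum_left scale_sum_right mult_sum_scale sum_distrib_left mult_ac)
    finally show ?thesis .
  qed
  show ?L unfolding partial_action_def using A1 P2 P3 by blast
qed


lemma taft_cc_sum:
  assumes a: "a < n" and j: "j < n"
  shows "(\<Sum>c\<in>taft_B n. \<Sum>d\<in>taft_B n. scale (taft_cc n q (a,j) c d) (F c d)) =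
         (\<Sum>t\<in>{0..j}. scale (qbinom q j t) (F ((a+t) mod n, j-t) (a,t)))"
proof -
  have fin: "finite (taft_B n)" by (simp add: taft_B_def)
  have inner: "(\<Sum>c\<in>taft_B n. scale (taft_cc n q (a,j) c d) (F c d)) =
      (if fst d = a \<and> snd d \<le> j then scale (qbinom q j (snd d)) (F ((a + snd d) mod n, j - snd d) d) else 0)"
    if d: "d \<in> taft_B n" for d
  proof -
    obtain i' j' where dd: "d = (i', j')" by (cases d)
    have "\<And>c. scale (taft_cc n q (a,j) c d) (F c d) =
       (if c = ((a + j') mod n, j - j') then (if i' = a \<and> j' \<le> j then scale (qbinom q j j') (F c d) else 0) else 0)"
      by (auto simp: taft_cc_def dd split: prod.splits)
    moreover have "((a + j') mod n, j - j') \<in> taft_B n" using a j by (auto simp: taft_B_def)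
    ultimately show ?thesis using fin by (simp add: dd)
  qed
  have "(\<Sum>c\<in>taft_B n. \<Sum>d\<in>taft_B n. scale (taft_cc n q (a,j) c d) (F c d)) =
        (\<Sum>d\<in>taft_B n. \<Sum>c\<in>taft_B n. scale (taft_cc n q (a,j) c d) (F c d))"
    by (rule sum.swap)
  also have "\<dots> = (\<Sum>d\<in>taft_B n. (if fst d = a \<and> snd d \<le> j then scale (qbinom q j (snd d)) (F ((a + snd d) mod n, j - snd d) d) else 0))"
    by (rule sum.cong[OF refl]) (rule inner)
  also have "\<dots> = (\<Sum>d\<in>{d\<in>taft_B n. fst d = a \<and> snd d \<le> j}. scale (qbinom q j (snd d)) (F ((a + snd d) mod n, j - snd d) d))"
    using fin by (simp add: sum.inter_filter)
  also have "{d\<in>taft_B n. fst d = a \<and> snd d \<le> j} = (\<lambda>t. (a,t)) ` {0..j}"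
    using a j by (auto simp: taft_B_def)
  also have "(\<Sum>d\<in>(\<lambda>t. (a,t)) ` {0..j}. scale (qbinom q j (snd d)) (F ((a + snd d) mod n, j - snd d) d)) =
       (\<Sum>t\<in>{0..j}. scale (qbinom q j t) (F ((a+t) mod n, j-t) (a,t)))"
    by (subst sum.reindex) (auto simp: inj_on_def)
  finally show ?thesis .
qed

lemma taft_mc_sum:
  assumes n: "0 < n"
  shows "(\<Sum>f\<in>taft_B n. scale (taft_mc n q (i,j) (l,m) f) (G f)) =
     (if j + m < n then scale (q^(j*l)) (G ((i+l) mod n, j+m)) else 0)"
proof -
  have "\<And>f. scale (taft_mc n q (i,j) (l,m) f) (G f) =
     (if f = ((i+l) mod n, j+m) then scale (q^(j*l)) (G ((i+l) mod n, j+m)) else 0)"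
    by (auto simp: taft_mc_def split: prod.splits)
  moreover have "((i+l) mod n, j+m) \<in> taft_B n \<longleftrightarrow> j + m < n" using n by (auto simp: taft_B_def)
  moreover have "finite (taft_B n)" by (simp add: taft_B_def)
  ultimately show ?thesis by simp
qed

lemma cyc_cc_sum:
  assumes "a \<in> cyc_B n"
  shows "(\<Sum>c\<in>cyc_B n. \<Sum>d\<in>cyc_B n. scale (cyc_cc a c d) (F c d)) = F a a"
proof -
  have "\<And>c d. scale (cyc_cc a c d) (F c d) = (if c = a then (if d = a then F a a else 0) else 0)"
    by (simp add: cyc_cc_def)
  then have "\<And>c. (\<Sum>d\<in>cyc_B n. scale (cyc_cc a c d) (F c d)) = (if c = a then F a a else 0)"
    using assms by (simp add: cyc_B_def)
  then show ?thesis using assms by (simp add: cyc_B_def)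
qed

lemma cyc_mc_sum:
  assumes "0 < n"
  shows "(\<Sum>f\<in>cyc_B n. scale (cyc_mc n d e f) (G f)) = G ((d+e) mod n)"
proof -
  have "\<And>f. scale (cyc_mc n d e f) (G f) = (if f = (d+e) mod n then G ((d+e) mod n) else 0)"
    by (simp add: cyc_mc_def)
  then show ?thesis using assms by (simp add: cyc_B_def)
qed

lemma taft_unit_actL:
  assumes "0 < n"
  shows "actL scale (taft_B n) act taft_unit x = act (0,0) x"
proof -
  have "\<And>b. scale (taft_unit b) (act b x) = (if b = (0,0) then act (0,0) x else 0)"
    by (auto simp: taft_unit_def split: prod.splits)
  then show ?thesis using assms by (simp add: actL_def taft_B_def)
qed

lemma cyc_unit_actL:
  assumes "0 < n"
  shows "actL scale (cyc_B n) G cyc_unit x = G 0 x"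
proof -
  have "\<And>b. scale (cyc_unit b) (G b x) = (if b = 0 then G 0 x else 0)"
    by (auto simp: cyc_unit_def)
  then show ?thesis using assms by (simp add: actL_def cyc_B_def)
qed

end

lemma idx_lemma:
  fixes i n :: nat
  assumes i: "i < n"
  shows "(n - 1 + (i + 1) mod n) mod n = i"
proof (cases "i + 1 < n")
  case True
  have a: "(i+1) mod n = i+1" using True by (rule mod_less)
  have b: "n - 1 + (i+1) = n + i" using True by arith
  show ?thesis unfolding a b using i by simp
next
  case False
  then have c: "i + 1 = n" using i by arith
  then have d: "(i+1) mod n = 0" by simp
  have e: "n - 1 + 0 = i" using c by arith
  show ?thesis unfolding d e using i by simp
qed

theorem corollary3p13:
  fixes sm :: "'k::field \<Rightarrow> 'a::ring_1 \<Rightarrow> 'a"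
    and n :: nat and q :: 'k
    and act :: "nat \<times> nat \<Rightarrow> 'a \<Rightarrow> 'a"
  assumes alg: "k_algebra sm"
    and n2: "n \<ge> 2"
    and prim: "primitive_root q n"
    and lin: "\<forall>b\<in>taft_B n. Vector_Spaces.linear sm sm (act b)"
    and g1: "act (1, 0) 1 = 0 \<or> act (1, 0) 1 = 1"
    and gk: "\<exists>k. 2 \<le> k \<and> k \<le> n - 1 \<and> (\<forall>a. act (k, 0) a = a)"
  shows "partial_action sm (taft_B n) (taft_mc n q) (taft_cc n q) taft_unit act \<longleftrightarrow>
     global_action sm (taft_B n) (taft_mc n q) (taft_cc n q) taft_unit taft_counit act \<or>
     (partial_action sm (cyc_B n) (cyc_mc n) cyc_cc cyc_unit (\<lambda>i. act (i, 0)) \<and>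
      act (1, 0) 1 = 0 \<and>
      (\<forall>i<n. \<forall>j<n. \<forall>a. act (i, j) a = (if j = 0 then act (i, 0) a else 0)))"
proof -
  interpret K: kalg sm using alg unfolding k_algebra_def kalg_def kalg_axioms_def by blast
  have n0: "0 < n" using n2 by simp
  have finT: "finite (taft_B n)" by (simp add: taft_B_def)
  have finC: "finite (cyc_B n)" by (simp add: cyc_B_def)
  have linC: "\<forall>b\<in>cyc_B n. Vector_Spaces.linear sm sm ((\<lambda>i. act (i, 0)) b)"
    using lin n0 by (auto simp: taft_B_def cyc_B_def)
  have lin0: "act b 0 = 0" if "b \<in> taft_B n" for b
  proof -
    have "act b (sm 0 0) = sm 0 (act b 0)" by (rule K.lin_scale) (use lin that in blast)
    then show ?thesis by simp
  qed
  have TI: "partial_action sm (taft_B n) (taft_mc n q) (taft_cc n q) taft_unit act \<longleftrightarrow>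
   (\<forall>x. act (0,0) x = x) \<and>
   (\<forall>b\<in>taft_B n. \<forall>x y. act b (x*y) = (\<Sum>c\<in>taft_B n. \<Sum>d\<in>taft_B n. sm (taft_cc n q b c d) (act c x * act d y))) \<and>
   (\<forall>b\<in>taft_B n. \<forall>e\<in>taft_B n. \<forall>x. act b (act e x) =
      (\<Sum>c\<in>taft_B n. \<Sum>d\<in>taft_B n. sm (taft_cc n q b c d) (act c 1 * (\<Sum>f\<in>taft_B n. sm (taft_mc n q d e f) (act f x)))))"
    using K.pa_iff[OF finT lin, of "taft_mc n q" "taft_cc n q" taft_unit] n0
    by (simp add: K.taft_unit_actL)
  have c2: "(\<Sum>c\<in>cyc_B n. \<Sum>d\<in>cyc_B n. sm (cyc_cc b c d) (act (c,0) x * act (d,0) y)) = act (b,0) x * act (b,0) y"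
    if "b \<in> cyc_B n" for b x y
    using K.cyc_cc_sum[OF that, where F="\<lambda>c d. act (c,0) x * act (d,0) y"] by simp
  have c3: "(\<Sum>c\<in>cyc_B n. \<Sum>d\<in>cyc_B n. sm (cyc_cc b c d) (act (c,0) 1 * (\<Sum>f\<in>cyc_B n. sm (cyc_mc n d e f) (act (f,0) x))))
     = act (b,0) 1 * act ((b+e) mod n, 0) x"
    if "b \<in> cyc_B n" for b e x
    using K.cyc_cc_sum[OF that, where F="\<lambda>c d. act (c,0) 1 * (\<Sum>f\<in>cyc_B n. sm (cyc_mc n d e f) (act (f,0) x))"]
      K.cyc_mc_sum[OF n0, where G="\<lambda>f. act (f,0) x"] by simp
  have CI: "partial_action sm (cyc_B n) (cyc_mc n) cyc_cc cyc_unit (\<lambda>i. act (i, 0)) \<longleftrightarrow>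
     (\<forall>x. act (0,0) x = x) \<and>
     (\<forall>b\<in>cyc_B n. \<forall>x y. act (b,0) (x*y) = act (b,0) x * act (b,0) y) \<and>
     (\<forall>b\<in>cyc_B n. \<forall>e\<in>cyc_B n. \<forall>x. act (b,0) (act (e,0) x) = act (b,0) 1 * act ((b+e) mod n, 0) x)"
    using K.pa_iff[OF finC linC, of "cyc_mc n" cyc_cc cyc_unit] K.cyc_unit_actL[OF n0] c2 c3
    by simp
  have q0: "q \<noteq> 0" using prim n0 unfolding primitive_root_def by (metis power_0_left less_not_refl2 zero_neq_one)
  obtain k where k2: "2 \<le> k" and kn: "k \<le> n - 1" and Gk: "\<And>a. act (k, 0) a = a" using gk by blast
  have qk: "q ^ k \<noteq> 1" using prim k2 kn unfolding primitive_root_def by auto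
  show ?thesis
  proof
    assume P: "partial_action sm (taft_B n) (taft_mc n q) (taft_cc n q) taft_unit act"
    then have F0: "\<And>x. act (0,0) x = x"
      and T2: "\<And>b x y. b \<in> taft_B n \<Longrightarrow> act b (x*y) = (\<Sum>c\<in>taft_B n. \<Sum>d\<in>taft_B n. sm (taft_cc n q b c d) (act c x * act d y))"
      and T3: "\<And>b e x. b \<in> taft_B n \<Longrightarrow> e \<in> taft_B n \<Longrightarrow> act b (act e x) =
      (\<Sum>c\<in>taft_B n. \<Sum>d\<in>taft_B n. sm (taft_cc n q b c d) (act c 1 * (\<Sum>f\<in>taft_B n. sm (taft_mc n q d e f) (act f x))))"
      using TI by blast+
    have F1: "act (l,0) (act (i,j) x) = act (l,0) 1 * act ((l+i) mod n, j) x"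
      if "l < n" "i < n" "j < n" for l i j x
    proof -
      have m1: "(l,0) \<in> taft_B n" "(i,j) \<in> taft_B n" using that by (auto simp: taft_B_def)
      show ?thesis
        using T3[OF m1, of x] K.taft_cc_sum[OF that(1), of 0 q, where F="\<lambda>c d. act c 1 * (\<Sum>f\<in>taft_B n. sm (taft_mc n q d (i,j) f) (act f x))"]
          that n0 by (simp add: K.taft_mc_sum)
    qed
    have F2: "act (i,0) (x*y) = act (i,0) x * act (i,0) y" if "i < n" for i x y
    proof -
      have m1: "(i,0) \<in> taft_B n" using that by (auto simp: taft_B_def)
      show ?thesis
        using T2[OF m1, of x y] K.taft_cc_sum[OF that, of 0 q, where F="\<lambda>c d. act c x * act d y"]
          that n0 by simp
    qed
    have F3: "act (n-1,1) (act (l,m) x) = act (n-1,1) 1 * act ((n-1+l) mod n, m) x +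
        (if 1+m < n then sm (q^l) (act ((n-1+l) mod n, 1+m) x) else 0)"
      if "l < n" "m < n" for l m x
    proof -
      have m1: "(n-1,1) \<in> taft_B n" "(l,m) \<in> taft_B n" using that n2 by (auto simp: taft_B_def)
      have e01: "{0..1::nat} = {0,1}" by auto
      have n1: "1 < n" using n2 by simp
      have S: "(\<Sum>t\<in>{0..1::nat}. G t) = G 0 + G 1" for G :: "nat \<Rightarrow> 'a" by (simp add: e01)
      have "act (n-1,1) (act (l,m) x) = (\<Sum>t\<in>{0..1}. sm (qbinom q 1 t) (act ((n-1+t) mod n, 1-t) 1 *
           (\<Sum>f\<in>taft_B n. sm (taft_mc n q (n-1,t) (l,m) f) (act f x))))"
        using trans[OF T3[OF m1, of x] K.taft_cc_sum[of "n-1" n 1 q, where F="\<lambda>c d. act c 1 * (\<Sum>f\<in>taft_B n. sm (taft_mc n q d (l,m) f) (act f x))"]]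
          n1 by simp
      also have "\<dots> = sm (qbinom q 1 0) (act ((n-1+0) mod n, 1-0) 1 *
           (\<Sum>f\<in>taft_B n. sm (taft_mc n q (n-1,0) (l,m) f) (act f x))) +
          sm (qbinom q 1 1) (act ((n-1+1) mod n, 1-1) 1 *
           (\<Sum>f\<in>taft_B n. sm (taft_mc n q (n-1,1) (l,m) f) (act f x)))"
        by (rule S)
      also have "\<dots> = act (n-1,1) 1 * act ((n-1+l) mod n, m) x +
        (if 1+m < n then sm (q^l) (act ((n-1+l) mod n, 1+m) x) else 0)"
        using n1 n0 that F0 by (simp add: K.taft_mc_sum)
      finally show ?thesis .
    qed
    show "global_action sm (taft_B n) (taft_mc n q) (taft_cc n q) taft_unit taft_counit act \<or>
     (partial_action sm (cyc_B n) (cyc_mc n) cyc_cc cyc_unit (\<lambda>i. act (i, 0)) \<and>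
      act (1, 0) 1 = 0 \<and>
      (\<forall>i<n. \<forall>j<n. \<forall>a. act (i, j) a = (if j = 0 then act (i, 0) a else 0)))"
    proof -
      have kk: "k < n" using kn n2 by simp
      have F3': "act (n-1,1) (act (l,m) x) = act (n-1,1) 1 * act ((n-1+l) mod n, m) x +
          sm (q^l) (act ((n-1+l) mod n, m+1) x)" if "l < n" "m + 1 < n" for l m x
        using F3[of l m x] that by simp
      have z1: "act (n-1,1) 1 * act (n-1,0) x = 0" for x
        using F3'[of 0 0 x] n2 F0 by simp
      have h2: "act ((k+(n-1)) mod n, 0) x = act (n-1,0) x" for x
        using F1[of k "n-1" 0 x] kk n2 Gk by simp
      have h3: "act ((k+(n-1)) mod n, 1) x = act (n-1,1) x" for x
        using F1[of k "n-1" 1 x] kk n2 Gk by simp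
      have zx: "act (n-1,1) x = 0" for x
      proof -
        have "act (n-1,1) x = act (n-1,1) 1 * act ((k+(n-1)) mod n, 0) x + sm (q^k) (act ((k+(n-1)) mod n, 1) x)"
          using F3'[of k 0 x] kk n2 Gk by (simp add: add.commute)
        then have "sm 1 (act (n-1,1) x) = sm (q^k) (act (n-1,1) x)"
          using h2 h3 z1 by simp
        then show ?thesis using qk by (simp del: K.scale_one)
      qed
      have Z: "act (i,j) x = 0" if "i < n" "0 < j" "j < n" for i j x
      proof -
        have l: "(i+1) mod n < n" using n0 by simp
        have "act (n-1,1) (act ((i+1) mod n, j-1) x) = act (n-1,1) 1 * act ((n-1+(i+1) mod n) mod n, j-1) x +
          sm (q^((i+1) mod n)) (act ((n-1+(i+1) mod n) mod n, j-1+1) x)"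
          by (rule F3') (use that l in auto)
        then have "sm (q^((i+1) mod n)) (act (i, j) x) = 0"
          using zx idx_lemma[OF that(1)] that by simp
        then show ?thesis using q0 by simp
      qed
      have cycP: "partial_action sm (cyc_B n) (cyc_mc n) cyc_cc cyc_unit (\<lambda>i. act (i, 0))"
        unfolding CI using F0 F1[of _ _ 0] F2 by (auto simp: cyc_B_def)
      have Zall: "\<forall>i<n. \<forall>j<n. \<forall>a. act (i, j) a = (if j = 0 then act (i, 0) a else 0)"
        using Z by simp
      show ?thesis
      proof (cases "act (1,0) 1 = 0")
        case True
        then show ?thesis using cycP Zall by blast
      next
        case False
        then have g11: "act (1,0) 1 = 1" using g1 by blast
        have Gi1: "i < n \<Longrightarrow> act (i,0) 1 = 1" for i
        proof (induction i)
          case 0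
          then show ?case using F0 by simp
        next
          case (Suc i)
          then have "act (1,0) (act (i,0) 1) = act (1,0) 1 * act ((1+i) mod n, 0) 1"
            using F1[of 1 i 0 1] n2 by simp
          then show ?case using Suc g11 by simp
        qed
        have cu: "act b 1 = sm (taft_counit b) 1" if "b \<in> taft_B n" for b
        proof -
          obtain i j where b: "b = (i,j)" by (cases b)
          with that have "i < n" "j < n" by (auto simp: taft_B_def)
          then show ?thesis using Gi1 Z b by (cases "j = 0") (auto simp: taft_counit_def)
        qed
        have "actL sm (taft_B n) act u 1 = sm (hcounit (taft_B n) taft_counit u) 1" for u
          unfolding actL_def hcounit_def using cu
          by (simp add: K.scale_sum_left)
        then show ?thesis unfolding global_action_def using P by blast
      qed
    qed
  next
    assume R: "global_action sm (taft_B n) (taft_mc n q) (taft_cc n q) taft_unit taft_counit act \<or>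
     (partial_action sm (cyc_B n) (cyc_mc n) cyc_cc cyc_unit (\<lambda>i. act (i, 0)) \<and>
      act (1, 0) 1 = 0 \<and>
      (\<forall>i<n. \<forall>j<n. \<forall>a. act (i, j) a = (if j = 0 then act (i, 0) a else 0)))"
    show "partial_action sm (taft_B n) (taft_mc n q) (taft_cc n q) taft_unit act"
    proof (cases "global_action sm (taft_B n) (taft_mc n q) (taft_cc n q) taft_unit taft_counit act")
      case True
      then show ?thesis unfolding global_action_def by blast
    next
      case False
      with R have cycP: "partial_action sm (cyc_B n) (cyc_mc n) cyc_cc cyc_unit (\<lambda>i. act (i, 0))"
        and H: "\<forall>i<n. \<forall>j<n. \<forall>a. act (i, j) a = (if j = 0 then act (i, 0) a else 0)" by blast+
      from cycP have C0: "\<And>x. act (0,0) x = x"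
        and C2: "\<And>b x y. b < n \<Longrightarrow> act (b,0) (x*y) = act (b,0) x * act (b,0) y"
        and C3: "\<And>b e x. b < n \<Longrightarrow> e < n \<Longrightarrow> act (b,0) (act (e,0) x) = act (b,0) 1 * act ((b+e) mod n, 0) x"
        unfolding CI by (auto simp: cyc_B_def)
      have Z: "act (i,j) a = 0" if "i < n" "0 < j" "j < n" for i j a
        using H that by simp
      show ?thesis unfolding TI
      proof (intro conjI ballI allI)
        show "act (0,0) x = x" for x by (rule C0)
      next
        fix b x y assume b: "b \<in> taft_B n"
        obtain i j where bij: "b = (i,j)" by (cases b)
        with b have i: "i < n" and j: "j < n" by (auto simp: taft_B_def)
        have "(\<Sum>c\<in>taft_B n. \<Sum>d\<in>taft_B n. sm (taft_cc n q b c d) (act c x * act d y)) =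
          (\<Sum>t\<in>{0..j}. sm (qbinom q j t) (act ((i+t) mod n, j-t) x * act (i,t) y))"
          unfolding bij by (rule K.taft_cc_sum[OF i j])
        also have "\<dots> = act b (x*y)"
        proof (cases "j = 0")
          case True
          then show ?thesis using i C2 bij by simp
        next
          case False
          have "act b (x*y) = 0" using Z i j False bij by simp
          moreover have "(\<Sum>t\<in>{0..j}. sm (qbinom q j t) (act ((i+t) mod n, j-t) x * act (i,t) y)) = 0"
          proof (rule sum.neutral, rule ballI)
            fix t assume t: "t \<in> {0..j}"
            show "sm (qbinom q j t) (act ((i+t) mod n, j-t) x * act (i,t) y) = 0"
            proof (cases "t < j")
              case True
              then have "act ((i+t) mod n, j-t) x = 0" using Z[of "(i+t) mod n" "j-t"] n0 j by simp
              then show ?thesis by simp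
            next
              case False
              then have "t = j" using t by simp
              then show ?thesis using Z[of i j] i j \<open>j \<noteq> 0\<close> by simp
            qed
          qed
          ultimately show ?thesis by simp
        qed
        finally show "act b (x*y) = (\<Sum>c\<in>taft_B n. \<Sum>d\<in>taft_B n. sm (taft_cc n q b c d) (act c x * act d y))"
          by simp
      next
        fix b e x assume b: "b \<in> taft_B n" and e: "e \<in> taft_B n"
        obtain i j where bij: "b = (i,j)" by (cases b)
        with b have i: "i < n" and j: "j < n" by (auto simp: taft_B_def)
        obtain l m where elm: "e = (l,m)" by (cases e)
        with e have l: "l < n" and m: "m < n" by (auto simp: taft_B_def)
        have "(\<Sum>c\<in>taft_B n. \<Sum>d\<in>taft_B n. sm (taft_cc n q b c d) (act c 1 * (\<Sum>f\<in>taft_B n. sm (taft_mc n q d e f) (act f x)))) =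
          (\<Sum>t\<in>{0..j}. sm (qbinom q j t) (act ((i+t) mod n, j-t) 1 * (\<Sum>f\<in>taft_B n. sm (taft_mc n q (i,t) e f) (act f x))))"
          unfolding bij by (rule K.taft_cc_sum[OF i j])
        also have "\<dots> = (\<Sum>t\<in>{0..j}. sm (qbinom q j t) (act ((i+t) mod n, j-t) 1 *
             (if t + m < n then sm (q^(t*l)) (act ((i+l) mod n, t+m) x) else 0)))"
          unfolding elm using n0 by (simp add: K.taft_mc_sum)
        also have "\<dots> = act b (act e x)"
        proof (cases "j = 0 \<and> m = 0")
          case True
          then show ?thesis using i l C3 bij elm by simp
        next
          case False
          have "act b (act e x) = 0"
          proof (cases "j = 0")
            case True
            with False have "m \<noteq> 0" by simp
            then have "act e x = 0" using Z l m elm by simp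
            then show ?thesis using lin0 b by simp
          next
            case False
            then show ?thesis using Z i j bij by simp
          qed
          moreover have "(\<Sum>t\<in>{0..j}. sm (qbinom q j t) (act ((i+t) mod n, j-t) 1 *
             (if t + m < n then sm (q^(t*l)) (act ((i+l) mod n, t+m) x) else 0))) = 0"
          proof (rule sum.neutral, rule ballI)
            fix t assume t: "t \<in> {0..j}"
            show "sm (qbinom q j t) (act ((i+t) mod n, j-t) 1 *
             (if t + m < n then sm (q^(t*l)) (act ((i+l) mod n, t+m) x) else 0)) = 0"
            proof (cases "t < j")
              case True
              then have "act ((i+t) mod n, j-t) 1 = 0" using Z[of "(i+t) mod n" "j-t"] n0 j by simp
              then show ?thesis by simp
            next
              case False
              then have "t = j" using t by simp
              then have "(if t + m < n then sm (q^(t*l)) (act ((i+l) mod n, t+m) x) else 0) = 0"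
                using Z[of "(i+l) mod n" "j+m"] n0 \<open>\<not> (j = 0 \<and> m = 0)\<close> by auto
              then show ?thesis by simp
            qed
          qed
          ultimately show ?thesis by simp
        qed
        finally show "act b (act e x) = (\<Sum>c\<in>taft_B n. \<Sum>d\<in>taft_B n. sm (taft_cc n q b c d) (act c 1 * (\<Sum>f\<in>taft_B n. sm (taft_mc n q d e f) (act f x))))"
          by simp
      qed
    qed
  qed
qed

end
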